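(* Let $K$ be a field and $\mathcal A$ an algebraic division algebra over $K$ (e.g. an algebraic field extension of $K$), regarded as a left $\mathcal A$-module via left multiplication. Let $J$ be a $K$-subspace of $\mathcal A$ and fix any choice of $\vartheta$. (i) If $J=0$ or $J=\mathcal A$, then $\sigma_\vartheta(J)=\tau_\vartheta(J)=\mathcal A$. (ii) If $J$ is nonzero and proper, then $\sigma_\vartheta(J)=\{0\}$ and $\tau_\vartheta(J)=(\mathcal A\setminus J)\cup\{0\}$.
   Context: For an associative unital algebra $\mathcal A$ over a commutative ring (here a field $K$), the symbol $\vartheta$ ranges over "left", "right", "pre-two-sided", "two-sided". A subspace $J\subseteq\mathcal A$ is a left (resp. right; two-sided) Mathieu subspace of $\mathcal A$ if whenever $a\in\mathcal A$ satisfies $a^m\in J$ for all $m\ge1$, then for all $b,c\in\mathcal A$ there is $N_0$ with $ba^m\in J$ (resp. $a^mc\in J$; $ba^mc\in J$) for all $m\ge N_0$; pre-two-sided means both left and right. A $\vartheta$-ideal means a left/right/two-sided ideal accordingly, and a two-sided ideal for $\vartheta$ = pre-two-sided. For a left $\mathcal A$-module $\mathcal M$, $u\in\mathcal M$, $N\subseteq \mathcal M$, $(N:u)=\{a\in\mathcal A: au\in N\}$; for a subspace $N$, $\sigma_\vartheta(N)=\{u\in\mathcal M: (N:u)\text{ is a }\vartheta\text{-ideal of }\mathcal A\}$, $\tau_\vartheta(N)=\{u\in\mathcal M: (N:u)\text{ is a }\vartheta\text{-Mathieu subspace of }\mathcal A\}$. A $K$-algebra is algebraic if every element satisfies a nonzero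 polynomial over $K$. *)

theory Defs
  imports Main "HOL-Computational_Algebra.Polynomial"
begin

datatype theta = Left | Right | PreTwoSided | TwoSided

definition is_K_algebra :: "('k::field \<Rightarrow> 'a::ring_1 \<Rightarrow> 'a) \<Rightarrow> bool" where
  "is_K_algebra scale \<longleftrightarrow> vector_space scale \<and>
     (\<forall>k a b. scale k (a * b) = scale k a * b \<and> scale k (a * b) = a * scale k b)"

definition algebraic_algebra :: "('k::field \<Rightarrow> 'a::ring_1 \<Rightarrow> 'a) \<Rightarrow> bool" where
  "algebraic_algebra scale \<longleftrightarrow>
     (\<forall>a::'a. \<exists>p::'k poly. p \<noteq> 0 \<and> (\<Sum>i\<le>degree p. scale (coeff p i) (a ^ i)) = 0)"

definition left_ideal :: "'a::ring_1 set \<Rightarrow> bool" where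
  "left_ideal I \<longleftrightarrow> 0 \<in> I \<and> (\<forall>x\<in>I. \<forall>y\<in>I. x + y \<in> I) \<and> (\<forall>r. \<forall>x\<in>I. r * x \<in> I)"

definition right_ideal :: "'a::ring_1 set \<Rightarrow> bool" where
  "right_ideal I \<longleftrightarrow> 0 \<in> I \<and> (\<forall>x\<in>I. \<forall>y\<in>I. x + y \<in> I) \<and> (\<forall>r. \<forall>x\<in>I. x * r \<in> I)"

definition theta_ideal :: "theta \<Rightarrow> 'a::ring_1 set \<Rightarrow> bool" where
  "theta_ideal th I = (case th of
      Left \<Rightarrow> left_ideal I
    | Right \<Rightarrow> right_ideal I
    | PreTwoSided \<Rightarrow> left_ideal I \<and> right_ideal I
    | TwoSided \<Rightarrow> left_ideal I \<and> right_ideal I)"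

definition left_mathieu :: "('k::field \<Rightarrow> 'a::ring_1 \<Rightarrow> 'a) \<Rightarrow> 'a set \<Rightarrow> bool" where
  "left_mathieu scale J \<longleftrightarrow> module.subspace scale J \<and>
     (\<forall>a. (\<forall>m\<ge>1. a ^ m \<in> J) \<longrightarrow> (\<forall>b. \<exists>N0. \<forall>m\<ge>N0. b * a ^ m \<in> J))"

definition right_mathieu :: "('k::field \<Rightarrow> 'a::ring_1 \<Rightarrow> 'a) \<Rightarrow> 'a set \<Rightarrow> bool" where
  "right_mathieu scale J \<longleftrightarrow> module.subspace scale J \<and>
     (\<forall>a. (\<forall>m\<ge>1. a ^ m \<in> J) \<longrightarrow> (\<forall>c. \<exists>N0. \<forall>m\<ge>N0. a ^ m * c \<in> J))"

definition two_sided_mathieu :: "('k::field \<Rightarrow> 'a::ring_1 \<Rightarrow> 'a) \<Rightarrow> 'a set \<Rightarrow> bool" where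
  "two_sided_mathieu scale J \<longleftrightarrow> module.subspace scale J \<and>
     (\<forall>a. (\<forall>m\<ge>1. a ^ m \<in> J) \<longrightarrow> (\<forall>b c. \<exists>N0. \<forall>m\<ge>N0. b * a ^ m * c \<in> J))"

definition theta_mathieu :: "theta \<Rightarrow> ('k::field \<Rightarrow> 'a::ring_1 \<Rightarrow> 'a) \<Rightarrow> 'a set \<Rightarrow> bool" where
  "theta_mathieu th scale J = (case th of
      Left \<Rightarrow> left_mathieu scale J
    | Right \<Rightarrow> right_mathieu scale J
    | PreTwoSided \<Rightarrow> left_mathieu scale J \<and> right_mathieu scale J
    | TwoSided \<Rightarrow> two_sided_mathieu scale J)"

text \<open>(N:u) for the left module A over itself (action = left multiplication).\<close>
definition colon :: "'a::ring_1 set \<Rightarrow> 'a \<Rightarrow> 'a set" where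
  "colon N u = {a. a * u \<in> N}"

definition sigma_set :: "theta \<Rightarrow> 'a::ring_1 set \<Rightarrow> 'a set" where
  "sigma_set th N = {u. theta_ideal th (colon N u)}"

definition tau_set :: "theta \<Rightarrow> ('k::field \<Rightarrow> 'a::ring_1 \<Rightarrow> 'a) \<Rightarrow> 'a set \<Rightarrow> 'a set" where
  "tau_set th scale N = {u. theta_mathieu th scale (colon N u)}"

end

theory Submission
  imports Defs
begin

lemma key_one:
  fixes scale :: "'k::field \<Rightarrow> 'a::division_ring \<Rightarrow> 'a"
  assumes alg: "is_K_algebra scale" and aa: "algebraic_algebra scale"
    and L: "module.subspace scale L" and a0: "a \<noteq> 0" and pw: "\<forall>m\<ge>1. a ^ m \<in> L"
  shows "1 \<in> L"
proof -
  interpret vector_space scale using alg unfolding is_K_algebra_def by auto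
  have comm: "\<And>k x y. scale k (x * y) = x * scale k y"
    using alg unfolding is_K_algebra_def by metis
  obtain p :: "'k poly" where p0: "p \<noteq> 0"
    and ps: "(\<Sum>i\<le>degree p. scale (coeff p i) (a ^ i)) = 0"
    using aa unfolding algebraic_algebra_def by blast
  define d where "d = degree p"
  define c where "c = coeff p"
  have ex: "\<exists>i. c i \<noteq> 0" using p0 c_def by (metis leading_coeff_neq_0)
  define k where "k = (LEAST i. c i \<noteq> 0)"
  have ck: "c k \<noteq> 0" unfolding k_def using ex by (rule LeastI_ex)
  have below: "\<And>i. i < k \<Longrightarrow> c i = 0" unfolding k_def using not_less_Least by blast
  have kd: "k \<le> d" using ck c_def d_def le_degree by blast
  have "(\<Sum>i\<le>d. scale (c i) (a ^ i)) = (\<Sum>i\<in>{k..d}. scale (c i) (a ^ i))"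
  proof (rule sum.mono_neutral_right)
    show "\<forall>i\<in>{..d} - {k..d}. scale (c i) (a ^ i) = 0" using below by auto
  qed auto
  also have "\<dots> = (\<Sum>i\<in>{k..d}. a ^ k * scale (c i) (a ^ (i - k)))"
  proof (rule sum.cong)
    fix i assume "i \<in> {k..d}"
    then have "a ^ i = a ^ k * a ^ (i - k)" by (simp add: power_add[symmetric])
    then show "scale (c i) (a ^ i) = a ^ k * scale (c i) (a ^ (i - k))" by (simp add: comm)
  qed simp
  also have "\<dots> = a ^ k * (\<Sum>i\<in>{k..d}. scale (c i) (a ^ (i - k)))"
    by (simp add: sum_distrib_left)
  finally have "a ^ k * (\<Sum>i\<in>{k..d}. scale (c i) (a ^ (i - k))) = 0"
    using ps c_def d_def by simp
  then have T: "(\<Sum>i\<in>{k..d}. scale (c i) (a ^ (i - k))) = 0" using a0 by simp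
  have "{k..d} = insert k {k<..d}" using kd by auto
  then have "(\<Sum>i\<in>{k..d}. scale (c i) (a ^ (i - k)))
      = scale (c k) 1 + (\<Sum>i\<in>{k<..d}. scale (c i) (a ^ (i - k)))" by simp
  with T have eq: "scale (c k) 1 = - (\<Sum>i\<in>{k<..d}. scale (c i) (a ^ (i - k)))"
    by (simp add: eq_neg_iff_add_eq_0)
  have "(\<Sum>i\<in>{k<..d}. scale (c i) (a ^ (i - k))) \<in> L"
    by (rule subspace_sum[OF L]) (use pw in \<open>auto intro!: subspace_scale[OF L]\<close>)
  then have "scale (c k) 1 \<in> L" using eq subspace_neg[OF L] by simp
  then have "scale (inverse (c k)) (scale (c k) 1) \<in> L" by (rule subspace_scale[OF L])
  moreover have "scale (inverse (c k)) (scale (c k) 1) = 1" using ck by simp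
  ultimately show ?thesis by simp
qed


lemma mathieu_all:
  fixes scale :: "'k::field \<Rightarrow> 'a::division_ring \<Rightarrow> 'a"
  assumes "module.subspace scale L"
    and "\<And>a b c m. (\<forall>m\<ge>1. a ^ m \<in> L) \<Longrightarrow> m \<ge> 1 \<Longrightarrow> b * a ^ m * c \<in> L"
  shows "theta_mathieu th scale L"
proof -
  have l: "\<And>a b m. (\<forall>m\<ge>1. a ^ m \<in> L) \<Longrightarrow> m \<ge> 1 \<Longrightarrow> b * a ^ m \<in> L"
    using assms(2)[where c=1] by simp
  have r: "\<And>a c m. (\<forall>m\<ge>1. a ^ m \<in> L) \<Longrightarrow> m \<ge> 1 \<Longrightarrow> a ^ m * c \<in> L"
    using assms(2)[where b=1] by simp
  have "left_mathieu scale L" unfolding left_mathieu_def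
  proof (intro conjI allI impI)
    fix a b assume "\<forall>m\<ge>1. a ^ m \<in> L"
    then show "\<exists>N0. \<forall>m\<ge>N0. b * a ^ m \<in> L" using l by blast
  qed (rule assms(1))
  moreover have "right_mathieu scale L" unfolding right_mathieu_def
  proof (intro conjI allI impI)
    fix a c assume "\<forall>m\<ge>1. a ^ m \<in> L"
    then show "\<exists>N0. \<forall>m\<ge>N0. a ^ m * c \<in> L" using r by blast
  qed (rule assms(1))
  moreover have "two_sided_mathieu scale L" unfolding two_sided_mathieu_def
  proof (intro conjI allI impI)
    fix a b c assume "\<forall>m\<ge>1. a ^ m \<in> L"
    then show "\<exists>N0. \<forall>m\<ge>N0. b * a ^ m * c \<in> L" using assms(2) by blast
  qed (rule assms(1))
  ultimately show ?thesis by (cases th) (auto simp: theta_mathieu_def)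
qed

lemma not_mathieu:
  fixes scale :: "'k::field \<Rightarrow> 'a::division_ring \<Rightarrow> 'a"
  assumes "1 \<in> L" and "y \<notin> L"
  shows "\<not> theta_mathieu th scale L"
proof -
  have p: "\<forall>m\<ge>1. (1::'a) ^ m \<in> L" using assms by simp
  have "\<not> left_mathieu scale L"
  proof
    assume "left_mathieu scale L"
    then obtain N0 where "\<forall>m\<ge>N0. y * 1 ^ m \<in> L" using p unfolding left_mathieu_def by blast
    then have "y * 1 ^ N0 \<in> L" by blast
    then show False using assms(2) by simp
  qed
  moreover have "\<not> right_mathieu scale L"
  proof
    assume "right_mathieu scale L"
    then obtain N0 where "\<forall>m\<ge>N0. 1 ^ m * y \<in> L" using p unfolding right_mathieu_def by blast
    then have "1 ^ N0 * y \<in> L" by blast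
    then show False using assms(2) by simp
  qed
  moreover have "\<not> two_sided_mathieu scale L"
  proof
    assume "two_sided_mathieu scale L"
    then obtain N0 where "\<forall>m\<ge>N0. 1 * 1 ^ m * y \<in> L" using p unfolding two_sided_mathieu_def by blast
    then have "1 * 1 ^ N0 * y \<in> L" by blast
    then show False using assms(2) by simp
  qed
  ultimately show ?thesis by (cases th) (auto simp: theta_mathieu_def)
qed

lemma not_ideal:
  fixes L :: "'a::division_ring set"
  assumes "x \<in> L" "x \<noteq> 0" "y \<notin> L"
  shows "\<not> theta_ideal th L"
proof -
  have "(y * inverse x) * x = y" using assms(2) by (simp add: mult.assoc)
  then have "\<not> left_ideal L" unfolding left_ideal_def using assms by metis
  moreover have "x * (inverse x * y) = y" using assms(2) by (simp add: mult.assoc[symmetric])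
  then have "\<not> right_ideal L" unfolding right_ideal_def using assms by metis
  ultimately show ?thesis by (cases th) (auto simp: theta_ideal_def)
qed

lemma ideal_UNIV: "theta_ideal th (UNIV :: 'a::ring_1 set)"
  by (cases th) (auto simp: theta_ideal_def left_ideal_def right_ideal_def)

lemma ideal_zero: "theta_ideal th ({0} :: 'a::ring_1 set)"
  by (cases th) (auto simp: theta_ideal_def left_ideal_def right_ideal_def)

theorem corollary4p6:
  fixes scale :: "'k::field \<Rightarrow> 'a::division_ring \<Rightarrow> 'a"
    and J :: "'a set" and th :: theta
  assumes "is_K_algebra scale"
    and "algebraic_algebra scale"
    and "module.subspace scale J"
  shows "(J = {0} \<or> J = UNIV \<longrightarrow> sigma_set th J = UNIV \<and> tau_set th scale J = UNIV)
       \<and> (J \<noteq> {0} \<and> J \<noteq> UNIV \<longrightarrow> sigma_set th J = {0} \<and> tau_set th scale J = (UNIV - J) \<union> {0})"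
proof -
  interpret vector_space scale using assms(1) unfolding is_K_algebra_def by auto
  have lmul: "\<And>k x y. scale k (x * y) = scale k x * y"
    using assms(1) unfolding is_K_algebra_def by metis
  have J: "subspace J" using assms(3) .
  have csub: "subspace (colon J u)" for u
  proof (rule subspaceI)
    show "0 \<in> colon J u" using subspace_0[OF J] by (simp add: colon_def)
    show "x + y \<in> colon J u" if "x \<in> colon J u" "y \<in> colon J u" for x y
      using that subspace_add[OF J] by (simp add: colon_def distrib_right)
    show "scale c x \<in> colon J u" if "x \<in> colon J u" for c x
      using that subspace_scale[OF J] by (simp add: colon_def lmul[symmetric])
  qed
  have c0: "colon J 0 = UNIV" using subspace_0[OF J] by (simp add: colon_def)
  have cU: "colon UNIV u = (UNIV::'a set)" for u by (simp add: colon_def)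
  have cZ: "u \<noteq> 0 \<Longrightarrow> colon {0} u = ({0}::'a set)" for u by (auto simp: colon_def)
  have mU: "theta_mathieu th scale (UNIV::'a set)"
    by (rule mathieu_all) auto
  have mZ: "theta_mathieu th scale ({0}::'a set)"
  proof (rule mathieu_all)
    fix a b c :: 'a and m :: nat
    assume "\<forall>m\<ge>1. a ^ m \<in> {0}" "m \<ge> 1"
    then have "a ^ 1 \<in> {0}" by blast
    then have "a = 0" by simp
    then show "b * a ^ m * c \<in> {0}" using \<open>m \<ge> 1\<close> by (simp add: zero_power)
  qed simp
  show ?thesis
  proof (intro conjI impI)
    assume h: "J = {0} \<or> J = UNIV"
    have "theta_ideal th (colon J u) \<and> theta_mathieu th scale (colon J u)" for u
    proof (cases "u = 0")
      case True then show ?thesis using c0 ideal_UNIV mU by simp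
    next
      case False
      show ?thesis using h
      proof
        assume "J = {0}" then show ?thesis using cZ[OF False] ideal_zero mZ by simp
      next
        assume "J = UNIV" then show ?thesis using cU ideal_UNIV mU by simp
      qed
    qed
    then show "sigma_set th J = UNIV" "tau_set th scale J = UNIV"
      unfolding sigma_set_def tau_set_def by auto
  next
    assume h: "J \<noteq> {0} \<and> J \<noteq> UNIV"
    obtain x where x: "x \<in> J" "x \<noteq> 0" using h subspace_0[OF J] by blast
    obtain y where y: "y \<notin> J" using h by blast
    show "sigma_set th J = {0}"
    proof (rule set_eqI)
      fix u :: 'a
      show "u \<in> sigma_set th J \<longleftrightarrow> u \<in> {0}"
      proof (cases "u = 0")
        case True then show ?thesis using c0 ideal_UNIV by (simp add: sigma_set_def)
      next
        case False
        have "x * inverse u \<in> colon J u" using x False by (simp add: colon_def mult.assoc)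
        moreover have "x * inverse u \<noteq> 0" using x False by simp
        moreover have "y * inverse u \<notin> colon J u" using y False by (simp add: colon_def mult.assoc)
        ultimately have "\<not> theta_ideal th (colon J u)" by (rule not_ideal)
        then show ?thesis using False by (simp add: sigma_set_def)
      qed
    qed
    show "tau_set th scale J = (UNIV - J) \<union> {0}"
    proof (rule set_eqI)
      fix u :: 'a
      show "u \<in> tau_set th scale J \<longleftrightarrow> u \<in> (UNIV - J) \<union> {0}"
      proof (cases "u = 0")
        case True then show ?thesis using c0 mU by (simp add: tau_set_def)
      next
        case False
        show ?thesis
        proof (cases "u \<in> J")
          case True
          have "1 \<in> colon J u" using True by (simp add: colon_def)
          moreover have "y * inverse u \<notin> colon J u" using y False by (simp add: colon_def mult.assoc)
          ultimately have "\<not> theta_mathieu th scale (colon J u)" by (rule not_mathieu)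
          then show ?thesis using True False by (simp add: tau_set_def)
        next
          case nJ: False
          have "theta_mathieu th scale (colon J u)"
          proof (rule mathieu_all)
            show "module.subspace scale (colon J u)" using csub .
            fix a b c :: 'a and m :: nat
            assume pw: "\<forall>m\<ge>1. a ^ m \<in> colon J u" and m: "m \<ge> 1"
            have "a = 0"
            proof (rule ccontr)
              assume "a \<noteq> 0"
              then have "1 \<in> colon J u" using key_one[OF assms(1,2) csub _ pw] by blast
              then show False using nJ by (simp add: colon_def)
            qed
            then show "b * a ^ m * c \<in> colon J u"
              using m subspace_0[OF csub] by (simp add: zero_power)
          qed
          then show ?thesis using nJ by (simp add: tau_set_def)
        qed
      qed
    qed
  qed
qed

end
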